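(* Let $n$ be a positive integer. Every partition $x\in C_2(n)$ is either a Metropolis 2-partition of $n$ or an extension of some Metropolis 2-partition $y$ of some integer $m<n$.
   Context: A partition of $n$ is identified with a point $x=(x_1,\dots,x_n)\in\mathbb{Z}_{\ge 0}^n$ satisfying $x_1+2x_2+\dots+nx_n=n$, where $x_i$ is the number of parts equal to $i$. Let $P(n)$ be the set of partitions of $n$ and $P_n=\mathrm{conv}\,P(n)\subset\mathbb{R}^n$. $C_2(n)$ is the set of partitions $x\in P(n)$ that are not vertices of $P_n$ and can be written as $x=\lambda y+(1-\lambda)z$ with $y,z\in P(n)$ different from $x$ and $0<\lambda<1$. For an even positive integer $m$, a Metropolis 2-partition of $m$ is a partition of $m$ obtained by joining (taking the multiset union of the parts of) two, not necessarily different, partitions of $m/2$. A partition $x$ of $n$ is an extension of a partition $y$ of $m<n$ if every part of $y$ is a part of $x$. *)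

theory Defs
  imports "HOL-Analysis.Analysis"
begin

text \<open>A partition of n is its multiplicity vector x, x i = number of parts equal to i
  (coordinates i in {1..n}; all other coordinates are 0).\<close>
definition partitions :: "nat \<Rightarrow> (nat \<Rightarrow> nat) set" where
  "partitions n = {x. (\<forall>i. x i \<noteq> 0 \<longrightarrow> i \<in> {1..n}) \<and> (\<Sum>i=1..n. i * x i) = n}"

definition pt :: "(nat \<Rightarrow> nat) \<Rightarrow> nat \<Rightarrow> real" where
  "pt x = (\<lambda>i. real (x i))"

definition conv_hull :: "(nat \<Rightarrow> real) set \<Rightarrow> (nat \<Rightarrow> real) set" where
  "conv_hull S = {p. \<exists>F c. finite F \<and> F \<subseteq> S \<and> (\<forall>u\<in>F. 0 \<le> c u) \<and> sum c F = 1
                      \<and> p = (\<lambda>i. \<Sum>u\<in>F. c u * u i)}"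

definition is_vertex :: "(nat \<Rightarrow> real) set \<Rightarrow> (nat \<Rightarrow> real) \<Rightarrow> bool" where
  "is_vertex K p \<longleftrightarrow> p \<in> K \<and>
     \<not> (\<exists>a\<in>K. \<exists>b\<in>K. a \<noteq> b \<and> (\<exists>t. 0 < t \<and> t < 1 \<and> p = (\<lambda>i. t * a i + (1 - t) * b i)))"

definition partition_polytope :: "nat \<Rightarrow> (nat \<Rightarrow> real) set" where
  "partition_polytope n = conv_hull (pt ` partitions n)"

definition C2 :: "nat \<Rightarrow> (nat \<Rightarrow> nat) set" where
  "C2 n = {x \<in> partitions n. \<not> is_vertex (partition_polytope n) (pt x) \<and>
     (\<exists>y\<in>partitions n. \<exists>z\<in>partitions n. y \<noteq> x \<and> z \<noteq> x \<and>
        (\<exists>t::real. 0 < t \<and> t < 1 \<and> pt x = (\<lambda>i. t * pt y i + (1 - t) * pt z i)))}"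

definition metropolis2 :: "nat \<Rightarrow> (nat \<Rightarrow> nat) \<Rightarrow> bool" where
  "metropolis2 m x \<longleftrightarrow> 0 < m \<and> even m \<and>
     (\<exists>y\<in>partitions (m div 2). \<exists>z\<in>partitions (m div 2). x = (\<lambda>i. y i + z i))"

definition extends_partition :: "(nat \<Rightarrow> nat) \<Rightarrow> (nat \<Rightarrow> nat) \<Rightarrow> bool" where
  "extends_partition x y \<longleftrightarrow> (\<forall>i. y i \<le> x i)"

end

theory Submission
  imports Defs
begin

lemma descent:
  fixes x :: "nat \<Rightarrow> nat" and A B :: "nat \<Rightarrow> int"
  shows "0 < p \<Longrightarrow> 0 < q \<Longrightarrow> (\<forall>i. int q * A i = int p * B i) \<Longrightarrow>
    (\<forall>i. A i \<le> int (x i)) \<Longrightarrow> (\<forall>i. - B i \<le> int (x i)) \<Longrightarrow> A j \<noteq> 0 \<Longrightarrow>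
    (\<Sum>i=1..n. int i * A i) = 0 \<Longrightarrow>
    \<exists>v. (\<forall>i. \<bar>v i\<bar> \<le> int (x i)) \<and> v j \<noteq> 0 \<and> (\<Sum>i=1..n. int i * v i) = 0"
proof (induction "p + q" arbitrary: p q A B rule: less_induct)
  case less
  have sB: "(\<Sum>i=1..n. int i * B i) = 0"
  proof -
    have "int q * (\<Sum>i=1..n. int i * A i) = (\<Sum>i=1..n. int i * (int q * A i))"
      by (simp add: sum_distrib_left algebra_simps)
    also have "\<dots> = (\<Sum>i=1..n. int i * (int p * B i))" using less.prems(3) by simp
    also have "\<dots> = int p * (\<Sum>i=1..n. int i * B i)"
      by (simp add: sum_distrib_left algebra_simps)
    finally show ?thesis using less.prems(1,7) by simp
  qed
  consider "p = q" | "q < p" | "p < q" by linarith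
  then show ?case
  proof cases
    case 1
    then have "\<forall>i. A i = B i" using less.prems(2,3) by simp
    then show ?thesis using less.prems by (intro exI[of _ A]) (auto simp: abs_le_iff)
  next
    case 2
    define A' where "A' = (\<lambda>i. A i - B i)"
    have r: "\<forall>i. int q * A' i = int (p - q) * B i"
      using less.prems(3) 2 by (simp add: A'_def algebra_simps of_nat_diff)
    have "int q * A' j \<noteq> 0"
    proof -
      have "B j \<noteq> 0" using less.prems(1,3,6) by (metis mult_eq_0_iff of_nat_eq_0_iff not_less0 less.prems(2) gr_zeroI)
      then show ?thesis using r 2 by simp
    qed
    then have A'j: "A' j \<noteq> 0" by simp
    have le: "\<forall>i. A' i \<le> int (x i)"
    proof
      fix i
      show "A' i \<le> int (x i)"
      proof (cases "B i \<ge> 0")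
        case True then show ?thesis using less.prems(4) by (simp add: A'_def) (smt (verit) less.prems(4))
      next
        case False
        then have "int q * A' i < 0" using r 2 by (simp add: mult_pos_neg)
        then have "A' i < 0" using less.prems(2) by (simp add: mult_less_0_iff)
        then show ?thesis by simp
      qed
    qed
    have sA': "(\<Sum>i=1..n. int i * A' i) = 0"
      using less.prems(7) sB by (simp add: A'_def algebra_simps sum_subtractf)
    show ?thesis
      using less.hyps[of "p - q" q A' B] 2 less.prems r le A'j sA' by simp
  next
    case 3
    define B' where "B' = (\<lambda>i. B i - A i)"
    have r: "\<forall>i. int (q - p) * A i = int p * B' i"
      using less.prems(3) 3 by (simp add: B'_def algebra_simps of_nat_diff)
    have le: "\<forall>i. - B' i \<le> int (x i)"
    proof
      fix i
      show "- B' i \<le> int (x i)"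
      proof (cases "A i \<le> 0")
        case True then show ?thesis using less.prems(5) by (simp add: B'_def) (smt (verit) less.prems(5))
      next
        case False
        then have "int p * B' i > 0" using r 3 by (metis mult_pos_pos of_nat_0_less_iff zero_less_diff not_le)
        then have "B' i > 0" using less.prems(1) by (simp add: zero_less_mult_iff)
        then show ?thesis by simp
      qed
    qed
    have sB': "(\<Sum>i=1..n. int i * B' i) = 0"
      using less.prems(7) sB by (simp add: B'_def algebra_simps sum_subtractf)
    show ?thesis
      using less.hyps[of p "q - p" A B'] 3 less.prems r le sB' by simp
  qed
qed


lemma part_from_sum:
  fixes f :: "nat \<Rightarrow> nat"
  assumes supp: "\<forall>i. f i \<noteq> 0 \<longrightarrow> i \<in> {1..N}" and s: "(\<Sum>i=1..N. i * f i) = k"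
  shows "f \<in> partitions k"
proof -
  have sk: "\<forall>i. f i \<noteq> 0 \<longrightarrow> i \<in> {1..k}"
  proof (intro allI impI)
    fix i assume fi: "f i \<noteq> 0"
    then have iN: "i \<in> {1..N}" using supp by blast
    have "i \<le> i * f i" using fi by simp
    also have "\<dots> \<le> (\<Sum>i=1..N. i * f i)"
      using iN by (intro member_le_sum) auto
    finally show "i \<in> {1..k}" using iN s by auto
  qed
  have "(\<Sum>i=1..k. i * f i) = (\<Sum>i=1..N. i * f i)"
  proof (cases "k \<le> N")
    case True
    show ?thesis
      by (rule sum.mono_neutral_left) (use True sk in auto)
  next
    case False
    show ?thesis
      by (rule sum.mono_neutral_right) (use False supp in auto)
  qed
  then show ?thesis using sk s by (simp add: partitions_def)
qed

theorem theorem5: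
  fixes n :: nat and x :: "nat \<Rightarrow> nat"
  assumes "0 < n" and "x \<in> C2 n"
  shows "metropolis2 n x \<or>
         (\<exists>m y. m < n \<and> y \<in> partitions m \<and> metropolis2 m y \<and> extends_partition x y)"
proof -
  from assms(2) obtain y z t where xP: "x \<in> partitions n" and yP: "y \<in> partitions n"
    and zP: "z \<in> partitions n" and yx: "y \<noteq> x" and t: "0 < t" "t < 1"
    and eq: "pt x = (\<lambda>i. t * pt y i + (1 - t) * pt z i)"
    unfolding C2_def by blast
  have hx: "\<And>i. real (x i) = t * real (y i) + (1 - t) * real (z i)"
    using fun_cong[OF eq] by (simp add: pt_def)
  have "y \<noteq> z"
  proof
    assume "y = z"
    then have "\<And>i. real (x i) = real (y i)" using hx by (simp add: algebra_simps)
    then have "\<And>i. x i = y i" by simp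
    then show False using yx by auto
  qed
  then obtain j where j: "y j \<noteq> z j" by auto
  define A where "A = (\<lambda>i. int (x i) - int (z i))"
  define B where "B = (\<lambda>i. int (y i) - int (x i))"
  have rA: "\<And>i. real_of_int (A i) = t * (real (y i) - real (z i))"
    using hx by (simp add: A_def algebra_simps)
  have rB: "\<And>i. real_of_int (B i) = (1 - t) * (real (y i) - real (z i))"
    using hx by (simp add: B_def algebra_simps)
  define p where "p = nat \<bar>A j\<bar>"
  define q where "q = nat \<bar>B j\<bar>"
  have dj: "real (y j) - real (z j) \<noteq> 0" using j by simp
  have Aj: "A j \<noteq> 0" using rA[of j] t dj by auto
  have Bj: "B j \<noteq> 0" using rB[of j] t dj by auto
  have p0: "0 < p" using Aj by (simp add: p_def)
  have q0: "0 < q" using Bj by (simp add: q_def)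
  have rel: "\<forall>i. int q * A i = int p * B i"
  proof
    fix i
    have "real_of_int (\<bar>B j\<bar> * A i) = real_of_int (\<bar>A j\<bar> * B i)"
      using t by (simp add: rA rB abs_mult)
    then have "\<bar>B j\<bar> * A i = \<bar>A j\<bar> * B i" by linarith
    then show "int q * A i = int p * B i" by (simp add: p_def q_def)
  qed
  have leA: "\<forall>i. A i \<le> int (x i)" by (simp add: A_def)
  have leB: "\<forall>i. - B i \<le> int (x i)" by (simp add: B_def)
  have sx: "(\<Sum>i=1..n. i * x i) = n" using xP by (simp add: partitions_def)
  have sy: "(\<Sum>i=1..n. i * y i) = n" using yP by (simp add: partitions_def)
  have sz: "(\<Sum>i=1..n. i * z i) = n" using zP by (simp add: partitions_def)
  have sxi: "(\<Sum>i=1..n. int i * int (x i)) = int n"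
    using arg_cong[OF sx, of int] by (simp add: of_nat_sum)
  have szi: "(\<Sum>i=1..n. int i * int (z i)) = int n"
    using arg_cong[OF sz, of int] by (simp add: of_nat_sum)
  have sA: "(\<Sum>i=1..n. int i * A i) = 0"
    using sxi szi by (simp add: A_def algebra_simps sum_subtractf)
  obtain v where v: "\<forall>i. \<bar>v i\<bar> \<le> int (x i)" and vj: "v j \<noteq> 0"
    and sv: "(\<Sum>i=1..n. int i * v i) = 0"
    using descent[OF p0 q0 rel leA leB Aj sA] by blast
  have xsupp: "\<forall>i. x i \<noteq> 0 \<longrightarrow> i \<in> {1..n}" using xP by (simp add: partitions_def)
  define P where "P = (\<lambda>i. nat (v i))"
  define Q where "Q = (\<lambda>i. nat (- v i))"
  define Y where "Y = (\<lambda>i. P i + Q i)"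
  have vPQ: "\<And>i. v i = int (P i) - int (Q i)" by (simp add: P_def Q_def)
  have Yx: "\<And>i. Y i \<le> x i"
  proof -
    fix i show "Y i \<le> x i" using v[rule_format, of i] by (simp add: Y_def P_def Q_def)
  qed
  have Ysupp: "\<forall>i. Y i \<noteq> 0 \<longrightarrow> i \<in> {1..n}"
  proof (intro allI impI)
    fix i assume "Y i \<noteq> 0"
    then have "x i \<noteq> 0" using Yx[of i] by linarith
    then show "i \<in> {1..n}" using xsupp by blast
  qed
  have Psupp: "\<forall>i. P i \<noteq> 0 \<longrightarrow> i \<in> {1..n}" using Ysupp by (simp add: Y_def)
  have Qsupp: "\<forall>i. Q i \<noteq> 0 \<longrightarrow> i \<in> {1..n}" using Ysupp by (simp add: Y_def)
  define k where "k = (\<Sum>i=1..n. i * P i)"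
  have "int (\<Sum>i=1..n. i * P i) - int (\<Sum>i=1..n. i * Q i) = (\<Sum>i=1..n. int i * v i)"
    by (simp add: of_nat_sum vPQ algebra_simps sum_subtractf)
  then have "int (\<Sum>i=1..n. i * Q i) = int k" using sv k_def by simp
  then have kQ: "(\<Sum>i=1..n. i * Q i) = k" by (simp only: of_nat_eq_iff)
  have "x j \<noteq> 0" using v[rule_format, of j] vj by auto
  then have jn: "j \<in> {1..n}" using xsupp by blast
  have k0: "0 < k"
  proof (cases "v j > 0")
    case True
    then have "0 < j * P j" using jn by (simp add: P_def)
    also have "\<dots> \<le> k" unfolding k_def using jn by (intro member_le_sum) auto
    finally show ?thesis .
  next
    case False
    then have "0 < j * Q j" using jn vj by (simp add: Q_def)
    also have "\<dots> \<le> k" unfolding kQ[symmetric] using jn by (intro member_le_sum) auto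
    finally show ?thesis .
  qed
  have sY: "(\<Sum>i=1..n. i * Y i) = 2 * k"
    using kQ by (simp add: Y_def k_def algebra_simps sum.distrib)
  have "(\<Sum>i=1..n. i * Y i) \<le> (\<Sum>i=1..n. i * x i)"
    by (intro sum_mono) (simp add: Yx)
  then have kn: "2 * k \<le> n" using sY sx by simp
  have PP: "P \<in> partitions k" using part_from_sum[OF Psupp] k_def by simp
  have QP: "Q \<in> partitions k" using part_from_sum[OF Qsupp kQ] .
  have YP: "Y \<in> partitions (2 * k)" using part_from_sum[OF Ysupp sY] .
  have met: "metropolis2 (2 * k) Y"
    unfolding metropolis2_def using k0 PP QP by (auto simp: Y_def)
  have ext: "extends_partition x Y" using Yx by (simp add: extends_partition_def)
  show ?thesis
  proof (cases "2 * k < n")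
    case True
    then show ?thesis using YP met ext by blast
  next
    case False
    then have kn2: "2 * k = n" using kn by simp
    have "(\<Sum>i=1..n. i * (x i - Y i)) = (\<Sum>i=1..n. i * x i) - (\<Sum>i=1..n. i * Y i)"
      using Yx by (simp add: diff_mult_distrib2 sum_subtractf_nat)
    then have "(\<Sum>i=1..n. i * (x i - Y i)) = 0" using sx sY kn2 by simp
    then have "\<forall>i\<in>{1..n}. i * (x i - Y i) = 0" by simp
    then have "\<forall>i\<in>{1..n}. x i = Y i" using Yx
      by (metis atLeastAtMost_iff diff_is_0_eq le_antisym mult_eq_0_iff not_one_le_zero)
    have "x = Y"
    proof
      fix i show "x i = Y i"
      proof (cases "i \<in> {1..n}")
        case True
        then show ?thesis using \<open>\<forall>i\<in>{1..n}. x i = Y i\<close> by blast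
      next
        case False
        then have "x i = 0" using xsupp by blast
        then show ?thesis using Yx[of i] by linarith
      qed
    qed
    then show ?thesis using met kn2 by simp
  qed
qed

end
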